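(* Let $v=4\lambda+3$ be a prime, let $p$ be any prime divisor of $\lambda+1$, and let $t=\mathrm{ord}_v(p)$. Then the Paley design $\mathrm{Paley}(v)$ is additive under $\mathbb{Z}_p^t$.
   Context: For a prime $v=4\lambda+3$, the set of nonzero squares of $\mathbb{F}_v$ is a $(4\lambda+3,2\lambda+1,\lambda)$ difference set in $\mathbb{Z}_v$; $\mathrm{Paley}(v)$ is the associated symmetric design with point set $\mathbb{Z}_v$ and blocks all translates $\{s+i : s \text{ a nonzero square}\}$, $i\in\mathbb{Z}_v$. $\mathrm{ord}_v(p)$ is the multiplicative order of $p$ modulo $v$. A design $(V,\mathscr B)$ is additive under an abelian group $G$ if there is an injective map $f:V\to G$ such that $\sum_{x\in B}f(x)=0$ for every block $B\in\mathscr B$. *)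

theory Defs
  imports "HOL-Number_Theory.Number_Theory" "HOL-Algebra.Product_Groups" "HOL-Algebra.Elementary_Groups"
begin

definition nonzero_squares :: "nat \<Rightarrow> int set" where
  "nonzero_squares v = {s \<in> {1..<int v}. QuadRes (int v) s}"

definition paley_points :: "nat \<Rightarrow> int set" where
  "paley_points v = {0..<int v}"

definition paley_blocks :: "nat \<Rightarrow> int set set" where
  "paley_blocks v = {(\<lambda>s. (s + i) mod int v) ` nonzero_squares v | i. i \<in> {0..<int v}}"

text \<open>A design (V, B) is additive under the abelian group G (written multiplicatively,
  as in HOL-Algebra): an injective map f : V \<rightarrow> G whose values sum to the identity on every block.\<close>
definition additive_under :: "('g, 'm) monoid_scheme \<Rightarrow> 'a set \<Rightarrow> 'a set set \<Rightarrow> bool" where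
  "additive_under G V Bs \<longleftrightarrow>
     (\<exists>f. f \<in> V \<rightarrow> carrier G \<and> inj_on f V \<and> (\<forall>B\<in>Bs. finprod G f B = \<one>\<^bsub>G\<^esub>))"

definition Zp_power :: "nat \<Rightarrow> nat \<Rightarrow> (nat \<Rightarrow> int) monoid" where
  "Zp_power p t = product_group {..<t} (\<lambda>_. integer_mod_group p)"

end

theory Submission imports Defs "HOL-Computational_Algebra.Polynomial" "HOL-Algebra.Algebraic_Closure" begin
hide_const (open) Divisibility.prime


lemma int_fermat:
  fixes a :: int and p :: nat
  assumes "prime p"
  shows "[a ^ p = a] (mod int p)"
proof (cases "int p dvd a")
  case True
  have "p > 0" using assms prime_gt_0_nat by blast
  then have "int p dvd a ^ p" using True by (meson dvd_power dvd_trans)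
  then show ?thesis using True by (simp add: cong_def)
next
  case False
  define b where "b = nat (a mod int p)"
  have p0: "int p > 0" using assms prime_gt_0_nat by simp
  have bint: "int b = a mod int p" unfolding b_def using p0 by simp
  have "\<not> p dvd b"
  proof
    assume "p dvd b"
    then have "int p dvd int b" by simp
    then have "int p dvd a" using bint by (simp add: dvd_mod_iff)
    then show False using False by simp
  qed
  then have "[b ^ (p - 1) = 1] (mod p)" using fermat_theorem assms by blast
  then have "[int b ^ (p - 1) = 1] (mod int p)"
    by (metis cong_int_iff of_nat_1 of_nat_power)
  then have "[(a mod int p) ^ (p - 1) = 1] (mod int p)" using bint by simp
  moreover have "[(a mod int p) ^ (p - 1) = a ^ (p - 1)] (mod int p)"
    by (intro cong_pow) (simp add: cong_def)
  ultimately have "[a ^ (p - 1) = 1] (mod int p)"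
    using cong_sym cong_trans by blast
  then have "[a ^ (p - 1) * a = 1 * a] (mod int p)" by (rule cong_mult) simp
  moreover have "a ^ (p - 1) * a = a ^ p"
    using p0 by (metis Suc_diff_1 of_nat_0_less_iff power_Suc2)
  ultimately show ?thesis by simp
qed

lemma binom_frob_poly:
  fixes A B :: "int poly" and p :: nat
  assumes "prime p"
  shows "\<exists>W. (A + B) ^ p = A ^ p + B ^ p + smult (int p) W"
proof -
  have p2: "p \<ge> 2" using assms prime_ge_2_nat by blast
  define f where "f k = of_nat (p choose k) * A ^ k * B ^ (p - k)" for k
  have "(A + B) ^ p = (\<Sum>k\<le>p. f k)" unfolding f_def by (rule binomial_ring)
  also have "{..p} = insert 0 (insert p {1..<p})" using p2 by auto
  also have "(\<Sum>k\<in>insert 0 (insert p {1..<p}). f k) = f 0 + (f p + (\<Sum>k\<in>{1..<p}. f k))"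
    using p2 by (simp add: sum.insert)
  also have "(\<Sum>k\<in>{1..<p}. f k) = smult (int p) (\<Sum>k\<in>{1..<p}. of_nat ((p choose k) div p) * A ^ k * B ^ (p - k))"
  proof -
    have "f k = of_nat p * (of_nat ((p choose k) div p) * A ^ k * B ^ (p - k))" if "k \<in> {1..<p}" for k
    proof -
      have "p dvd (p choose k)" using that assms by (intro dvd_choose_prime) auto
      then have "p choose k = p * ((p choose k) div p)" by simp
      then have "(of_nat (p choose k) :: int poly) = of_nat p * of_nat ((p choose k) div p)"
        by (metis of_nat_mult)
      then show ?thesis unfolding f_def by (simp add: mult.assoc)
    qed
    then have "(\<Sum>k\<in>{1..<p}. f k) = of_nat p * (\<Sum>k\<in>{1..<p}. of_nat ((p choose k) div p) * A ^ k * B ^ (p - k))"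
      by (simp add: sum_distrib_left)
    then show ?thesis by (simp add: of_nat_mult_conv_smult)
  qed
  finally show ?thesis using p2 unfolding f_def by (auto simp: algebra_simps)
qed

lemma frob_int_poly:
  fixes q :: "int poly" and p :: nat
  assumes "prime p"
  shows "\<exists>s. q ^ p = pcompose q (Polynomial.monom 1 p) + smult (int p) s"
proof (induction q)
  case 0
  have "p > 0" using assms prime_gt_0_nat by blast
  then show ?case by (intro exI[of _ 0]) simp
next
  case (pCons a q)
  then obtain s where s: "q ^ p = pcompose q (Polynomial.monom 1 p) + smult (int p) s" by blast
  have e1: "pCons a q = [:a:] + Polynomial.monom 1 1 * q"
    by (simp add: monom_Suc mult_pCons_left)
  obtain W where W: "([:a:] + Polynomial.monom 1 1 * q) ^ p = [:a:] ^ p + (Polynomial.monom 1 1 * q) ^ p + smult (int p) W"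
    using binom_frob_poly[OF assms] by blast
  obtain k where k: "a ^ p = a + int p * k"
    using int_fermat[OF assms, of a] by (metis cong_iff_lin cong_sym)
  have "(pCons a q) ^ p = [:a ^ p:] + Polynomial.monom 1 p * q ^ p + smult (int p) W"
    unfolding e1 W by (simp add: power_mult_distrib monom_power poly_const_pow)
  also have "\<dots> = pcompose (pCons a q) (Polynomial.monom 1 p) + smult (int p) ([:k:] + Polynomial.monom 1 p * s + W)"
    unfolding s k by (simp add: pcompose_pCons algebra_simps smult_add_right)
  finally show ?case by blast
qed



lemma bij_betw_by_card:
  assumes "inj_on f A" "f ` A \<subseteq> B" "card A = card B" "finite B"
  shows "bij_betw f A B"
proof -
  have "card (f ` A) = card B" using assms card_image by metis
  then have "f ` A = B" using assms card_subset_eq by metis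
  then show ?thesis using assms unfolding bij_betw_def by blast
qed

locale paley_setup =
  fixes v lam :: nat
  assumes prime_v: "prime v" and v_def: "v = 4 * lam + 3"
begin

definition chi :: "int \<Rightarrow> int" where "chi a = Legendre a (int v)"

definition Qs :: "nat set" where "Qs = {s. 1 \<le> s \<and> s < v \<and> chi (int s) = 1}"
definition Ns :: "nat set" where "Ns = {s. 1 \<le> s \<and> s < v \<and> chi (int s) = -1}"

lemma v_ge3: "v \<ge> 3" using v_def by simp

lemma half: "(v - 1) div 2 = 2 * lam + 1" using v_def by simp

lemma chi_cong: "[a = b] (mod int v) \<Longrightarrow> chi a = chi b"
proof -
  assume c: "[a = b] (mod int v)"
  have "[a = 0] (mod int v) \<longleftrightarrow> [b = 0] (mod int v)"
    using c cong_sym cong_trans by blast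
  moreover have "QuadRes (int v) a \<longleftrightarrow> QuadRes (int v) b"
    unfolding QuadRes_def using c cong_sym cong_trans by blast
  ultimately show ?thesis unfolding chi_def Legendre_def by simp
qed

lemma chi_vals: "chi a \<in> {-1, 0, 1}" unfolding chi_def Legendre_def by auto

lemma chi_zero_iff: "chi a = 0 \<longleftrightarrow> [a = 0] (mod int v)"
  unfolding chi_def Legendre_def by auto

lemma chi_euler: "[chi a = a ^ (2 * lam + 1)] (mod int v)"
  using euler_criterion[OF prime_v, of a] v_ge3 half unfolding chi_def by simp

lemma small_cong_eq:
  assumes "x \<in> {-1, 0, 1::int}" "y \<in> {-1, 0, 1::int}" "[x = y] (mod int v)"
  shows "x = y"
proof -
  have "int v dvd (x - y)" using assms(3) by (simp add: cong_iff_dvd_diff cong_sym_eq)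
  moreover have "\<bar>x - y\<bar> < int v" using assms(1,2) v_ge3 by auto
  ultimately show ?thesis
    by (metis abs_of_nat dvd_imp_le_int eq_iff_diff_eq_0 linorder_not_less)
qed

lemma chi_mult: "chi (a * b) = chi a * chi b"
proof -
  have "[chi (a * b) = (a * b) ^ (2 * lam + 1)] (mod int v)" by (rule chi_euler)
  moreover have "[chi a * chi b = a ^ (2 * lam + 1) * b ^ (2 * lam + 1)] (mod int v)"
    using chi_euler cong_mult by blast
  ultimately have "[chi (a * b) = chi a * chi b] (mod int v)"
    by (metis cong_sym cong_trans power_mult_distrib)
  moreover have "chi a * chi b \<in> {-1, 0, 1}" using chi_vals[of a] chi_vals[of b] by auto
  ultimately show ?thesis using small_cong_eq[OF chi_vals[of "a * b"]] by blast
qed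

lemma chi_minus1: "chi (-1) = -1"
proof -
  have "[chi (-1) = (-1) ^ (2 * lam + 1)] (mod int v)" by (rule chi_euler)
  then have "[chi (-1) = -1] (mod int v)" by simp
  then show ?thesis using small_cong_eq[OF chi_vals[of "-1"]] by simp
qed

lemma chi_one: "chi 1 = 1"
proof -
  have "[chi 1 = 1 ^ (2 * lam + 1)] (mod int v)" by (rule chi_euler)
  then show ?thesis using small_cong_eq[OF chi_vals[of 1]] by simp
qed

lemma chi_nonzero: "1 \<le> s \<Longrightarrow> s < v \<Longrightarrow> chi (int s) = 1 \<or> chi (int s) = -1"
proof -
  assume a: "1 \<le> s" "s < v"
  then have "\<not> v dvd s" by (auto dest: dvd_imp_le)
  then have "\<not> [int s = 0] (mod int v)" by (simp add: cong_0_iff)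
  then show ?thesis using chi_vals[of "int s"] chi_zero_iff by auto
qed

lemma QN_union: "Qs \<union> Ns = {1..<v}"
proof
  show "Qs \<union> Ns \<subseteq> {1..<v}" unfolding Qs_def Ns_def by auto
  show "{1..<v} \<subseteq> Qs \<union> Ns"
  proof
    fix x assume "x \<in> {1..<v}"
    then have "1 \<le> x" "x < v" by auto
    then show "x \<in> Qs \<union> Ns" using chi_nonzero[of x] unfolding Qs_def Ns_def by auto
  qed
qed

lemma QN_disj: "Qs \<inter> Ns = {}"
  unfolding Qs_def Ns_def by auto

lemma finite_Qs: "finite Qs" unfolding Qs_def by auto
lemma finite_Ns: "finite Ns" unfolding Ns_def by auto

lemma chi_neg: "s < v \<Longrightarrow> chi (int (v - s)) = - chi (int s)"
proof -
  assume "s < v"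
  then have "[int (v - s) = (-1) * int s] (mod int v)"
    unfolding cong_iff_lin by (intro exI[of _ "-1"]) (simp add: of_nat_diff)
  then have "chi (int (v - s)) = chi ((-1) * int s)" by (rule chi_cong)
  also have "\<dots> = - chi (int s)" using chi_mult[of "-1" "int s"] chi_minus1 by simp
  finally show ?thesis .
qed

lemma bij_neg: "bij_betw (\<lambda>s. v - s) Qs Ns"
proof (rule bij_betw_imageI)
  show "inj_on (\<lambda>s. v - s) Qs" unfolding Qs_def by (intro inj_onI) auto
  show "(\<lambda>s. v - s) ` Qs = Ns"
  proof
    show "(\<lambda>s. v - s) ` Qs \<subseteq> Ns" unfolding Qs_def Ns_def using chi_neg by auto
    show "Ns \<subseteq> (\<lambda>s. v - s) ` Qs"
    proof
      fix n assume n: "n \<in> Ns"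
      then have "v - n \<in> Qs" unfolding Qs_def Ns_def using chi_neg by auto
      moreover have "n = v - (v - n)" using n unfolding Ns_def by auto
      ultimately show "n \<in> (\<lambda>s. v - s) ` Qs" by blast
    qed
  qed
qed

lemma card_QN: "card Qs = 2 * lam + 1" "card Ns = 2 * lam + 1"
proof -
  have "bij_betw (\<lambda>s. v - s) Qs Ns" by (rule bij_neg)
  then have e: "card Qs = card Ns" by (rule bij_betw_same_card)
  have "card Qs + card Ns = v - 1"
    using card_Un_disjoint[OF finite_Qs finite_Ns QN_disj] QN_union by simp
  then show "card Qs = 2 * lam + 1" "card Ns = 2 * lam + 1" using e v_def by auto
qed

lemma coprime_v: "1 \<le> k \<Longrightarrow> k < v \<Longrightarrow> coprime k v"
proof -
  assume a: "1 \<le> k" "k < v"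
  then have "\<not> v dvd k" by (auto dest: dvd_imp_le)
  then have "coprime v k" using prime_v prime_imp_coprime by blast
  then show ?thesis by (simp add: coprime_commute)
qed

lemma small_eq: "[x = y] (mod v) \<Longrightarrow> x < v \<Longrightarrow> y < v \<Longrightarrow> x = y"
  by (simp add: cong_def)

lemma mult_map_in: "1 \<le> k \<Longrightarrow> k < v \<Longrightarrow> 1 \<le> x \<Longrightarrow> x < v \<Longrightarrow> 1 \<le> (x * k) mod v \<and> (x * k) mod v < v"
proof -
  assume a: "1 \<le> k" "k < v" "1 \<le> x" "x < v"
  have "\<not> v dvd x" "\<not> v dvd k" using a by (auto dest: dvd_imp_le)
  then have "\<not> v dvd x * k" using prime_v prime_dvd_mult_iff by blast
  then have "(x * k) mod v \<noteq> 0" by (simp add: dvd_eq_mod_eq_0)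
  moreover have "(x * k) mod v < v" using a by simp
  ultimately show ?thesis by simp
qed

lemma mult_map_inj: "1 \<le> k \<Longrightarrow> k < v \<Longrightarrow> inj_on (\<lambda>x. (x * k) mod v) {..<v}"
proof (rule inj_onI)
  fix x y assume a: "1 \<le> k" "k < v" "x \<in> {..<v}" "y \<in> {..<v}" "(x * k) mod v = (y * k) mod v"
  then have "[x * k = y * k] (mod v)" by (simp add: cong_def)
  then have "[x = y] (mod v)" using cong_mult_rcancel_nat[OF coprime_v[OF a(1,2)]] by simp
  then show "x = y" using a small_eq by auto
qed

lemma mult_map_chi: "chi (int ((x * k) mod v)) = chi (int x) * chi (int k)"
proof -
  have "[int ((x * k) mod v) = int x * int k] (mod int v)"
    by (simp add: cong_def zmod_int)
  then show ?thesis using chi_cong chi_mult by metis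
qed

lemma mult_bij:
  assumes "k \<in> Qs \<union> Ns" and S: "S = Qs \<or> S = Ns"
  defines "T \<equiv> (if (k \<in> Qs) = (S = Qs) then Qs else Ns)"
  shows "bij_betw (\<lambda>x. (x * k) mod v) S T"
proof (rule bij_betw_by_card)
  have k: "1 \<le> k" "k < v" using assms(1) unfolding Qs_def Ns_def by auto
  show "inj_on (\<lambda>x. (x * k) mod v) S"
    using mult_map_inj[OF k] S unfolding Qs_def Ns_def by (auto intro: inj_on_subset)
  show "(\<lambda>x. (x * k) mod v) ` S \<subseteq> T"
  proof
    fix y assume "y \<in> (\<lambda>x. (x * k) mod v) ` S"
    then obtain x where x: "x \<in> S" "y = (x * k) mod v" by blast
    have x1: "1 \<le> x" "x < v" using x S unfolding Qs_def Ns_def by auto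
    have y1: "1 \<le> y" "y < v" using mult_map_in[OF k x1] x by auto
    have cy: "chi (int y) = chi (int x) * chi (int k)" using x mult_map_chi by simp
    have ck: "chi (int k) = (if k \<in> Qs then 1 else -1)" using assms(1) unfolding Qs_def Ns_def by auto
    have cx: "chi (int x) = (if S = Qs then 1 else -1)" using x(1) S unfolding Qs_def Ns_def by auto
    have "chi (int y) = (if (k \<in> Qs) = (S = Qs) then 1 else -1)" using cy ck cx by simp
    then show "y \<in> T" unfolding T_def Qs_def Ns_def using y1 by (simp split: if_splits)
  qed
  show "card S = card T" using card_QN S unfolding T_def by auto
  show "finite T" unfolding T_def using finite_Qs finite_Ns by auto
qed

lemma inv_exists: "1 \<le> m \<Longrightarrow> m < v \<Longrightarrow> \<exists>y. 1 \<le> y \<and> y < v \<and> [m * y = 1] (mod v)"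
proof -
  assume a: "1 \<le> m" "m < v"
  obtain x where x: "[m * x = Suc 0] (mod v)" using cong_solve_coprime_nat coprime_v[OF a] by blast
  have "[m * (x mod v) = m * x] (mod v)" by (simp add: cong_def mod_mult_right_eq)
  then have c: "[m * (x mod v) = 1] (mod v)" using x cong_trans by simp
  have "x mod v \<noteq> 0"
  proof
    assume "x mod v = 0"
    then have "[0 = 1] (mod v)" using c by simp
    then show False using v_ge3 by (simp add: cong_def)
  qed
  then show ?thesis using c v_ge3 by (intro exI[of _ "x mod v"]) auto
qed

definition Ns1 :: "nat set" where "Ns1 = {m \<in> Ns. m + 1 \<in> Qs}"
definition Ns2 :: "nat set" where "Ns2 = {m \<in> Ns. m + 1 \<in> Ns}"

lemma card_Ns12: "card Ns1 = lam" "card Ns2 = lam"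
proof -
  define iv where "iv m = (SOME y. 1 \<le> y \<and> y < v \<and> [m * y = 1] (mod v))" for m
  have iv: "1 \<le> iv m \<and> iv m < v \<and> [m * iv m = 1] (mod v)" if "1 \<le> m" "m < v" for m
    unfolding iv_def using someI_ex[OF inv_exists[OF that]] .
  have key: "iv m \<in> Ns \<and> chi (int (iv m + 1)) = - chi (int (m + 1))" if m: "m \<in> Ns" for m
  proof -
    have m1: "1 \<le> m" "m < v" using m unfolding Ns_def by auto
    have y: "1 \<le> iv m" "iv m < v" "[m * iv m = 1] (mod v)" using iv[OF m1] by auto
    have "[int m * int (iv m) = 1] (mod int v)" using y(3) by (metis cong_int_iff of_nat_1 of_nat_mult)
    then have "chi (int m * int (iv m)) = chi 1" by (rule chi_cong)
    then have cy: "chi (int (iv m)) = -1" using chi_mult chi_one m unfolding Ns_def by simp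
    have "[int (iv m + 1) = int (iv m) * int (m + 1)] (mod int v)"
    proof -
      have "[int (iv m) + int m * int (iv m) = int (iv m) + 1] (mod int v)"
        using \<open>[int m * int (iv m) = 1] (mod int v)\<close> by (simp add: cong_add_lcancel)
      then show ?thesis by (simp add: algebra_simps cong_sym)
    qed
    then have "chi (int (iv m + 1)) = chi (int (iv m) * int (m + 1))" by (rule chi_cong)
    also have "\<dots> = chi (int (iv m)) * chi (int (m + 1))" by (rule chi_mult)
    finally have "chi (int (iv m + 1)) = - chi (int (m + 1))" using cy by simp
    then show ?thesis using cy y unfolding Ns_def by auto
  qed
  have ivinj: "inj_on iv Ns"
  proof (rule inj_onI)
    fix m m' assume a: "m \<in> Ns" "m' \<in> Ns" "iv m = iv m'"
    have m1: "1 \<le> m" "m < v" "1 \<le> m'" "m' < v" using a unfolding Ns_def by auto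
    have h1: "[m * iv m = 1] (mod v)" using iv[OF m1(1,2)] by simp
    have h2: "[m' * iv m = 1] (mod v)" using iv[OF m1(3,4)] a(3) by simp
    have "[m * iv m = m' * iv m] (mod v)" using cong_trans[OF h1 cong_sym[OF h2]] .
    moreover have cop: "coprime (iv m) v" using coprime_v iv[OF m1(1,2)] by blast
    ultimately have "[m = m'] (mod v)" using cong_mult_rcancel_nat[OF cop] by simp
    then show "m = m'" using small_eq m1 by blast
  qed
  have vN: "chi (int v) = 0" using chi_zero_iff[of "int v"] by (simp add: cong_def)
  have s12: "iv ` Ns1 \<subseteq> Ns2"
  proof
    fix y assume "y \<in> iv ` Ns1"
    then obtain m where m: "m \<in> Ns1" "y = iv m" by blast
    have "chi (int (m + 1)) = 1" using m unfolding Ns1_def Qs_def by auto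
    then have "chi (int (y + 1)) = -1" "y \<in> Ns" using key[of m] m unfolding Ns1_def by auto
    moreover have "y + 1 < v"
    proof (rule ccontr)
      assume "\<not> y + 1 < v"
      then have "y + 1 = v" using \<open>y \<in> Ns\<close> unfolding Ns_def by auto
      then show False using vN \<open>chi (int (y + 1)) = -1\<close> by simp
    qed
    ultimately show "y \<in> Ns2" unfolding Ns2_def Ns_def by auto
  qed
  have s21: "iv ` Ns2 \<subseteq> Ns1"
  proof
    fix y assume "y \<in> iv ` Ns2"
    then obtain m where m: "m \<in> Ns2" "y = iv m" by blast
    have "chi (int (m + 1)) = -1" using m unfolding Ns2_def Ns_def by auto
    then have "chi (int (y + 1)) = 1" "y \<in> Ns" using key[of m] m unfolding Ns2_def by auto
    moreover have "y + 1 < v"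
    proof (rule ccontr)
      assume "\<not> y + 1 < v"
      then have "y + 1 = v" using \<open>y \<in> Ns\<close> unfolding Ns_def by auto
      then show False using vN \<open>chi (int (y + 1)) = 1\<close> by simp
    qed
    ultimately show "y \<in> Ns1" unfolding Ns1_def Qs_def by auto
  qed
  have fin1: "finite Ns1" "finite Ns2" using finite_Ns unfolding Ns1_def Ns2_def by auto
  have "card Ns1 \<le> card Ns2"
    using card_inj_on_le[OF inj_on_subset[OF ivinj] s12 fin1(2)] unfolding Ns1_def by auto
  moreover have "card Ns2 \<le> card Ns1"
    using card_inj_on_le[OF inj_on_subset[OF ivinj] s21 fin1(1)] unfolding Ns2_def by auto
  moreover have "card Ns = card Ns1 + card Ns2 + 1"
  proof -
    have "chi (int (v - 1)) = - chi (int 1)" using chi_neg[of 1] v_ge3 by simp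
    then have "chi (int (v - 1)) = -1" using chi_one by simp
    then have vm1: "v - 1 \<in> Ns" using v_ge3 unfolding Ns_def by simp
    have "Ns = insert (v - 1) (Ns1 \<union> Ns2)"
    proof
      show "insert (v - 1) (Ns1 \<union> Ns2) \<subseteq> Ns" using vm1 unfolding Ns1_def Ns2_def by auto
      show "Ns \<subseteq> insert (v - 1) (Ns1 \<union> Ns2)"
      proof
        fix m assume m: "m \<in> Ns"
        show "m \<in> insert (v - 1) (Ns1 \<union> Ns2)"
        proof (cases "m = v - 1")
          case False
          then have "m + 1 \<in> {1..<v}" using m unfolding Ns_def by auto
          then have "m + 1 \<in> Qs \<union> Ns" using QN_union by simp
          then show ?thesis using m unfolding Ns1_def Ns2_def by auto
        qed simp
      qed
    qed
    moreover have "v - 1 \<notin> Ns1 \<union> Ns2" using v_ge3 unfolding Ns1_def Ns2_def Qs_def Ns_def by auto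
    moreover have "Ns1 \<inter> Ns2 = {}" using QN_disj unfolding Ns1_def Ns2_def by auto
    ultimately show ?thesis using fin1 by (simp add: card_Un_disjoint)
  qed
  ultimately show "card Ns1 = lam" "card Ns2 = lam" using card_QN by auto
qed

end


definition iota :: "('a, 'b) ring_scheme \<Rightarrow> int \<Rightarrow> 'a" where
  "iota R a = add_pow R a \<one>\<^bsub>R\<^esub>"

definition peval :: "('a, 'b) ring_scheme \<Rightarrow> 'a \<Rightarrow> int poly \<Rightarrow> 'a" where
  "peval R z q = foldr (\<lambda>a acc. iota R a \<oplus>\<^bsub>R\<^esub> z \<otimes>\<^bsub>R\<^esub> acc) (coeffs q) \<zero>\<^bsub>R\<^esub>"

context cring
begin

lemma iota_closed [simp]: "iota R a \<in> carrier R"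
  unfolding iota_def using add.int_pow_closed[OF one_closed] by simp

lemma iota_add: "iota R (a + b) = iota R a \<oplus> iota R b"
  unfolding iota_def using add.int_pow_mult[OF one_closed] by simp

lemma iota_0 [simp]: "iota R 0 = \<zero>"
  unfolding iota_def add_pow_def by simp

lemma iota_1 [simp]: "iota R 1 = \<one>"
  unfolding iota_def using add.int_pow_1[OF one_closed] by simp

lemma iota_mult: "iota R (a * b) = iota R a \<otimes> iota R b"
proof -
  have "iota R a \<otimes> iota R b = add_pow R a (\<one> \<otimes> iota R b)"
    unfolding iota_def by (rule add_pow_ldistr_int) (simp_all add: iota_def[symmetric])
  also have "\<dots> = add_pow R a (add_pow R b \<one>)" by (simp add: iota_def[symmetric])
  also have "\<dots> = add_pow R (b * a) \<one>"
    using add.int_pow_pow[OF one_closed] by simp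
  finally show ?thesis unfolding iota_def by (simp add: mult.commute)
qed

lemma iota_neg: "iota R (- a) = \<ominus> iota R a"
proof -
  have "iota R (- a) \<oplus> iota R a = \<zero>" using iota_add[of "-a" a] by simp
  then show ?thesis using minus_equality[of "iota R (-a)" "iota R a"] by simp
qed

lemma iota_diff: "iota R (a - b) = iota R a \<ominus> iota R b"
  using iota_add[of a "-b"] iota_neg[of b] by (simp add: a_minus_def)

lemma peval_pCons:
  assumes z: "z \<in> carrier R"
  shows "peval R z (pCons a q) = iota R a \<oplus> z \<otimes> peval R z q"
proof (cases "a = 0 \<and> q = 0")
  case True
  then show ?thesis using z by (simp add: peval_def)
next
  case False
  then show ?thesis by (auto simp: peval_def cCons_def)
qed

lemma peval_0 [simp]: "peval R z 0 = \<zero>" by (simp add: peval_def)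

lemma peval_closed [simp]:
  assumes z: "z \<in> carrier R" shows "peval R z q \<in> carrier R"
  by (induction q) (simp_all add: peval_pCons z)

lemma peval_const [simp]:
  assumes z: "z \<in> carrier R" shows "peval R z [:a:] = iota R a"
  using peval_pCons[OF z, of a 0] z by simp

lemma peval_add:
  assumes z: "z \<in> carrier R" shows "peval R z (q1 + q2) = peval R z q1 \<oplus> peval R z q2"
proof (induction q1 arbitrary: q2)
  case 0 then show ?case using z by simp
next
  case (pCons a p)
  obtain b q where q2: "q2 = pCons b q" by (cases q2) auto
  have "peval R z (pCons a p + q2) = iota R (a + b) \<oplus> z \<otimes> (peval R z p \<oplus> peval R z q)"
    using pCons.IH[of q] q2 by (simp add: peval_pCons z)
  also have "\<dots> = (iota R a \<oplus> z \<otimes> peval R z p) \<oplus> (iota R b \<oplus> z \<otimes> peval R z q)"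
    using z by (simp add: iota_add r_distr a_ac)
  finally show ?case using q2 by (simp add: peval_pCons z)
qed

lemma peval_smult:
  assumes z: "z \<in> carrier R" shows "peval R z (smult c q) = iota R c \<otimes> peval R z q"
proof (induction q)
  case 0 then show ?case using z by simp
next
  case (pCons a q)
  have "peval R z (smult c (pCons a q)) = iota R (c * a) \<oplus> z \<otimes> (iota R c \<otimes> peval R z q)"
    using pCons.IH by (simp add: peval_pCons z)
  also have "\<dots> = iota R c \<otimes> (iota R a \<oplus> z \<otimes> peval R z q)"
    using z by (simp add: iota_mult r_distr m_ac)
  finally show ?case by (simp add: peval_pCons z)
qed

lemma peval_mult:
  assumes z: "z \<in> carrier R" shows "peval R z (q1 * q2) = peval R z q1 \<otimes> peval R z q2"
proof (induction q1)
  case 0 then show ?case using z by simp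
next
  case (pCons a p)
  have "peval R z (pCons a p * q2) = peval R z (smult a q2) \<oplus> peval R z (pCons 0 (p * q2))"
    by (simp add: mult_pCons_left peval_add z)
  also have "\<dots> = iota R a \<otimes> peval R z q2 \<oplus> z \<otimes> (peval R z p \<otimes> peval R z q2)"
    using pCons.IH z by (simp add: peval_smult peval_pCons)
  also have "\<dots> = (iota R a \<oplus> z \<otimes> peval R z p) \<otimes> peval R z q2"
    using z by (simp add: l_distr m_assoc)
  finally show ?case by (simp add: peval_pCons z)
qed

lemma peval_neg:
  assumes z: "z \<in> carrier R" shows "peval R z (- q) = \<ominus> peval R z q"
proof -
  have "peval R z (- q) \<oplus> peval R z q = \<zero>"
    using peval_add[OF z, of "-q" q] by simp
  then show ?thesis using minus_equality z by simp
qed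

lemma peval_diff:
  assumes z: "z \<in> carrier R" shows "peval R z (q1 - q2) = peval R z q1 \<ominus> peval R z q2"
  using peval_add[OF z, of q1 "-q2"] peval_neg[OF z, of q2] by (simp add: a_minus_def)

lemma peval_1 [simp]:
  assumes z: "z \<in> carrier R" shows "peval R z 1 = \<one>"
proof -
  have "peval R z [:1:] = \<one>" using peval_const[OF z, of 1] by simp
  then show ?thesis by (metis one_pCons)
qed

lemma peval_x:
  assumes z: "z \<in> carrier R" shows "peval R z (Polynomial.monom 1 1) = z"
  using z by (simp add: monom_Suc peval_pCons one_pCons[symmetric])

lemma peval_power:
  assumes z: "z \<in> carrier R" shows "peval R z (q ^ n) = peval R z q [^] n"
  by (induction n) (simp_all add: peval_mult z m_comm)

lemma peval_monom:
  assumes z: "z \<in> carrier R" shows "peval R z (Polynomial.monom c n) = iota R c \<otimes> z [^] n"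
proof (induction n)
  case 0
  then show ?case using z by (simp add: monom_0)
next
  case (Suc n)
  then show ?case using z by (simp add: monom_Suc peval_pCons m_ac)
qed

lemma peval_monom1:
  assumes z: "z \<in> carrier R" shows "peval R z (Polynomial.monom 1 n) = z [^] n"
  using peval_monom[OF z, of 1 n] z by simp

lemma peval_pcompose:
  assumes z: "z \<in> carrier R"
  shows "peval R z (pcompose q s) = peval R (peval R z s) q"
proof (induction q)
  case 0 then show ?case using z by simp
next
  case (pCons a q)
  then show ?case using z
    by (simp add: pcompose_pCons peval_add peval_mult peval_pCons)
qed

lemma peval_sum_cong:
  assumes z: "z \<in> carrier R" and "finite A"
    and "\<And>i. i \<in> A \<Longrightarrow> peval R z (f i) = peval R z (g i)"
  shows "peval R z (\<Sum>i\<in>A. f i) = peval R z (\<Sum>i\<in>A. g i)"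
  using assms(2,3)
proof (induction A rule: finite_induct)
  case empty then show ?case by simp
next
  case (insert x F)
  then show ?case by (simp add: peval_add z)
qed

end


lemma Zp_comm_group: "comm_group (Zp_power p t)"
proof -
  have g: "group (Zp_power p t)" unfolding Zp_power_def by (rule product_group) simp
  show ?thesis
  proof (rule group.group_comm_groupI[OF g])
    fix x y assume "x \<in> carrier (Zp_power p t)" "y \<in> carrier (Zp_power p t)"
    show "x \<otimes>\<^bsub>Zp_power p t\<^esub> y = y \<otimes>\<^bsub>Zp_power p t\<^esub> x"
      unfolding Zp_power_def by (simp add: add.commute)
  qed
qed

lemma Zp_carrier: "p > 0 \<Longrightarrow> carrier (Zp_power p t) = (\<Pi>\<^sub>E j\<in>{..<t}. {0..<int p})"
  unfolding Zp_power_def by (simp add: carrier_integer_mod_group)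

lemma Zp_one: "\<one>\<^bsub>Zp_power p t\<^esub> = (\<lambda>j\<in>{..<t}. 0)"
  unfolding Zp_power_def by simp

lemma Zp_finprod:
  assumes "finite B" "f \<in> B \<rightarrow> carrier (Zp_power p t)"
  shows "finprod (Zp_power p t) f B = (\<lambda>j\<in>{..<t}. (\<Sum>b\<in>B. f b j) mod int p)"
  using assms
proof (induction B rule: finite_induct)
  case empty
  interpret comm_group "Zp_power p t" by (rule Zp_comm_group)
  show ?case by (simp add: Zp_one)
next
  case (insert x F)
  interpret comm_group "Zp_power p t" by (rule Zp_comm_group)
  have "finprod (Zp_power p t) f (insert x F) = f x \<otimes>\<^bsub>Zp_power p t\<^esub> finprod (Zp_power p t) f F"
    using insert by (intro finprod_insert) auto
  also have "\<dots> = (\<lambda>j\<in>{..<t}. (f x j + (\<Sum>b\<in>F. f b j) mod int p) mod int p)"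
    using insert by (simp add: Zp_power_def cong: restrict_cong)
  also have "\<dots> = (\<lambda>j\<in>{..<t}. (\<Sum>b\<in>insert x F. f b j) mod int p)"
    using insert by (simp add: mod_add_right_eq)
  finally show ?case .
qed


lemma card_set_mset_le_size: "card (set_mset M) \<le> size M"
proof (induction M)
  case empty then show ?case by simp
next
  case (add x M)
  have "card (set_mset (add_mset x M)) \<le> Suc (card (set_mset M))"
    by (simp add: card_insert_if)
  then show ?case using add by simp
qed

definition lin :: "nat \<Rightarrow> (nat \<Rightarrow> int) \<Rightarrow> int poly" where
  "lin d c = (\<Sum>j<d. Polynomial.monom (c j) j)"

lemma coeff_lin: "Polynomial.coeff (lin d c) k = (if k < d then c k else 0)"
  unfolding lin_def by (simp add: coeff_sum coeff_monom)

definition bnd :: "nat \<Rightarrow> int poly \<Rightarrow> bool" where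
  "bnd d S \<longleftrightarrow> (\<forall>j\<ge>d. Polynomial.coeff S j = 0)"

lemma bnd_lin_eq: "bnd d S \<Longrightarrow> S = lin d (Polynomial.coeff S)"
  by (rule poly_eqI) (auto simp: coeff_lin bnd_def)

lemma bnd_lin: "bnd d (lin d c)" by (simp add: bnd_def coeff_lin)

lemma bnd_diff: "bnd d S \<Longrightarrow> bnd d T \<Longrightarrow> bnd d (S - T)" by (simp add: bnd_def)
lemma bnd_add: "bnd d S \<Longrightarrow> bnd d T \<Longrightarrow> bnd d (S + T)" by (simp add: bnd_def)
lemma bnd_smult: "bnd d S \<Longrightarrow> bnd d (smult a S)" by (simp add: bnd_def)
lemma bnd_Suc: "bnd d S \<Longrightarrow> bnd (Suc d) S" by (simp add: bnd_def)
lemma bnd_0: "bnd d 0" by (simp add: bnd_def)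
lemma bnd_sum: "finite A \<Longrightarrow> (\<And>i. i \<in> A \<Longrightarrow> bnd d (f i)) \<Longrightarrow> bnd d (\<Sum>i\<in>A. f i)"
  by (simp add: bnd_def coeff_sum)

context paley_setup
begin

lemma nonzero_squares_eq: "nonzero_squares v = int ` Qs"
proof
  show "nonzero_squares v \<subseteq> int ` Qs"
  proof
    fix s assume s: "s \<in> nonzero_squares v"
    then have s1: "1 \<le> s" "s < int v" "QuadRes (int v) s" unfolding nonzero_squares_def by auto
    have "\<not> [s = 0] (mod int v)"
    proof
      assume "[s = 0] (mod int v)"
      then have "int v dvd s" by (simp add: cong_0_iff)
      then show False using s1 zdvd_imp_le by fastforce
    qed
    then have "chi s = 1" using s1 unfolding chi_def Legendre_def by simp
    then have "nat s \<in> Qs" using s1 unfolding Qs_def by auto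
    then show "s \<in> int ` Qs" using s1 by (intro image_eqI[of _ _ "nat s"]) auto
  qed
  show "int ` Qs \<subseteq> nonzero_squares v"
  proof
    fix s assume "s \<in> int ` Qs"
    then obtain n where n: "n \<in> Qs" "s = int n" by blast
    then have "chi s = 1" "1 \<le> n" "n < v" unfolding Qs_def by auto
    then show "s \<in> nonzero_squares v" using n unfolding nonzero_squares_def chi_def Legendre_def
      by (auto split: if_splits)
  qed
qed

end

locale field_part = paley_setup v lam + field L
  for v lam :: nat and L :: "('a, 'b) ring_scheme" (structure) +
  fixes p t :: nat and w :: 'a
  assumes prime_p: "prime p"
    and charp: "iota L (int p) = \<zero>"
    and w_in: "w \<in> carrier L"
    and w_v: "w [^] v = \<one>"
    and w_ne: "w \<noteq> \<one>"
    and pt: "[p ^ t = 1] (mod v)"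
    and Qzero: "peval L w (\<Sum>s\<in>Qs. Polynomial.monom 1 s) = \<zero>"
    and t_pos: "t > 0"
begin

lemma p_gt1: "p > 1" using prime_p prime_gt_1_nat by blast

lemma iota_modp: "iota L a = iota L (a mod int p)"
proof -
  have "a = a mod int p + int p * (a div int p)" by simp
  then have "iota L a = iota L (a mod int p) \<oplus> iota L (int p) \<otimes> iota L (a div int p)"
    by (metis iota_add iota_mult)
  then show ?thesis using charp by simp
qed

lemma iota_dvd: "int p dvd a \<Longrightarrow> iota L a = \<zero>"
  using iota_modp[of a] by simp

lemma iota_inv:
  assumes "\<not> int p dvd c"
  obtains u where "iota L u \<otimes> iota L c = \<one>"
proof -
  have pr: "prime (int p)" using prime_p by simp
  have "coprime (int p) c" using prime_imp_coprime[OF pr assms] .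
  then have "coprime c (int p)" by (simp add: coprime_commute)
  then obtain u where u: "[c * u = 1] (mod int p)" using cong_solve_coprime_int by blast
  have "iota L u \<otimes> iota L c = iota L (c * u)" by (simp add: iota_mult m_comm)
  also have "\<dots> = iota L ((c * u) mod int p)" by (rule iota_modp)
  also have "(c * u) mod int p = 1" using u p_gt1 by (simp add: cong_def)
  finally show ?thesis using that by simp
qed

lemma peval_p: "z \<in> carrier L \<Longrightarrow> peval L z (smult (int p) q) = \<zero>"
  by (simp add: peval_smult charp)

lemma w_pow_mod: "w [^] n = w [^] (n mod v)"
proof -
  have "n = v * (n div v) + n mod v" by simp
  then have "w [^] n = (w [^] v) [^] (n div v) \<otimes> w [^] (n mod v)"
    by (metis nat_pow_mult nat_pow_pow w_in)
  then show ?thesis using w_v w_in by simp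
qed

lemma w_unit: "w [^] (i::nat) \<noteq> \<zero>"
proof
  assume a: "w [^] i = \<zero>"
  have "(w [^] v) [^] Suc i = w [^] (v * Suc i)" by (rule nat_pow_pow[OF w_in])
  then have "w [^] (v * Suc i) = \<one>" using w_v by simp
  moreover have "Suc i \<le> v * Suc i" using mult_le_mono1[of 1 v "Suc i"] v_ge3 by simp
  then have "v * Suc i = i + (v * Suc i - i)" by simp
  ultimately have "w [^] i \<otimes> w [^] (v * Suc i - i) = \<one>" by (metis nat_pow_mult w_in)
  then show False using a w_in by simp
qed

lemma w_inj_aux: "i < j \<Longrightarrow> j < v \<Longrightarrow> w [^] i = w [^] j \<Longrightarrow> False"
proof -
  assume a: "i < j" "j < v" "w [^] i = w [^] j"
  define k where "k = j - i"
  have k: "1 \<le> k" "k < v" using a unfolding k_def by auto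
  have "w [^] i \<otimes> w [^] k = w [^] (i + k)" by (rule nat_pow_mult[OF w_in])
  also have "i + k = j" using a unfolding k_def by simp
  finally have "w [^] i \<otimes> w [^] k = w [^] i \<otimes> \<one>" using a w_in by simp
  then have wk: "w [^] k = \<one>" using w_unit[of i] w_in m_lcancel by (metis nat_pow_closed one_closed)
  obtain x where x: "[k * x = Suc 0] (mod v)" using cong_solve_coprime_nat coprime_v[OF k] by blast
  have "(k * x) mod v = 1" using x v_ge3 by (simp add: cong_def)
  then have "w [^] (k * x) = w" using w_pow_mod[of "k * x"] w_in by simp
  moreover have "(w [^] k) [^] x = w [^] (k * x)" by (rule nat_pow_pow[OF w_in])
  then have "w [^] (k * x) = \<one>" using wk by simp
  ultimately show False using w_ne by simp
qed

lemma w_inj: "i < v \<Longrightarrow> j < v \<Longrightarrow> w [^] i = w [^] j \<Longrightarrow> i = j"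
  using w_inj_aux by (metis linorder_neqE_nat)

lemma frob: "z \<in> carrier L \<Longrightarrow> peval L z q [^] p = peval L (z [^] p) q"
proof -
  assume z: "z \<in> carrier L"
  obtain s where s: "q ^ p = pcompose q (Polynomial.monom 1 p) + smult (int p) s"
    using frob_int_poly[OF prime_p] by blast
  have "peval L z q [^] p = peval L z (q ^ p)" using z by (simp add: peval_power)
  also have "\<dots> = peval L (z [^] p) q"
    unfolding s using z by (simp add: peval_add peval_p peval_pcompose peval_monom1)
  finally show ?thesis .
qed

lemma frob_iter: "z \<in> carrier L \<Longrightarrow> peval L z q [^] (p ^ n) = peval L (z [^] (p ^ n)) q"
proof (induction n)
  case 0 then show ?case by simp
next
  case (Suc n)
  have "peval L z q [^] (p ^ Suc n) = (peval L z q [^] (p ^ n)) [^] p"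
    using Suc.prems by (simp add: nat_pow_pow mult.commute)
  also have "\<dots> = peval L (z [^] (p ^ n)) q [^] p" using Suc by simp
  also have "\<dots> = peval L ((z [^] (p ^ n)) [^] p) q" using Suc.prems by (simp add: frob)
  also have "(z [^] (p ^ n)) [^] p = z [^] (p ^ Suc n)"
    using Suc.prems by (simp add: nat_pow_pow mult.commute)
  finally show ?case .
qed

lemma w_pt: "w [^] (p ^ t) = w"
proof -
  have "(p ^ t) mod v = 1" using pt v_ge3 by (simp add: cong_def)
  then show ?thesis using w_pow_mod[of "p ^ t"] w_in by simp
qed

lemma fixed: "peval L w q [^] (p ^ t) = peval L w q"
  using frob_iter[OF w_in, of q t] w_pt by simp


lemma roots_bound: "finite {y \<in> carrier L. y [^] (p ^ t) = y} \<and> card {y \<in> carrier L. y [^] (p ^ t) = y} \<le> p ^ t"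
proof -
  define N where "N = p ^ t"
  have "p \<le> p ^ t" using p_gt1 t_pos by (simp add: self_le_power)
  then have N2: "N \<ge> 2" unfolding N_def using p_gt1 by simp
  define A where "A = \<one> # replicate (N - 2) \<zero>"
  define B where "B = [\<ominus> \<one>, \<zero>]"
  define P where "P = A @ B"
  have setP: "set P \<subseteq> carrier L" unfolding P_def A_def B_def by auto
  have Pc: "P \<in> carrier (poly_ring L)"
    unfolding univ_poly_carrier[symmetric] polynomial_def using setP by (simp add: P_def A_def)
  have lenP: "length P - 1 = N" unfolding P_def A_def B_def using N2 by simp
  have evalP: "eval P y = y [^] N \<ominus> y" if y: "y \<in> carrier L" for y
  proof -
    have "eval P y = eval A y \<otimes> y [^] length B \<oplus> eval B y"
      unfolding P_def by (rule eval_append) (use y in \<open>auto simp: A_def B_def\<close>)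
    also have "eval A y = \<one> \<otimes> y [^] (N - 2)"
      unfolding A_def using eval_monom[OF one_closed y, of "N - 2"] by (simp add: monom_def)
    also have "eval B y = \<ominus> y" unfolding B_def using y by (simp add: l_minus)
    also have "length B = 2" unfolding B_def by simp
    finally have "eval P y = y [^] (N - 2) \<otimes> y [^] (2::nat) \<ominus> y" using y by (simp add: a_minus_def)
    also have "y [^] (N - 2) \<otimes> y [^] (2::nat) = y [^] (N - 2 + 2)"
      by (rule nat_pow_mult[OF y])
    also have "N - 2 + 2 = N" using N2 by simp
    finally show ?thesis .
  qed
  have sub: "{y \<in> carrier L. y [^] (p ^ t) = y} \<subseteq> set_mset (roots P)"
  proof
    fix y assume "y \<in> {y \<in> carrier L. y [^] (p ^ t) = y}"
    then have y: "y \<in> carrier L" "y [^] N = y" unfolding N_def by auto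
    have "eval P y = \<zero>" using evalP[OF y(1)] y by (simp add: r_neg a_minus_def)
    then have "is_root P y" unfolding is_root_def using y by (simp add: P_def A_def)
    then show "y \<in> set_mset (roots P)" using roots_mem_iff_is_root[OF Pc] by simp
  qed
  have "card {y \<in> carrier L. y [^] (p ^ t) = y} \<le> card (set_mset (roots P))"
    by (rule card_mono[OF _ sub]) simp
  also have "\<dots> \<le> size (roots P)" by (rule card_set_mset_le_size)
  also have "\<dots> \<le> length P - 1" using size_roots_le_degree[OF Pc] by simp
  finally show ?thesis using lenP finite_subset[OF sub] unfolding N_def by simp
qed

definition indep :: "nat \<Rightarrow> bool" where
  "indep d \<longleftrightarrow> (\<forall>S. bnd d S \<and> peval L w S = \<zero> \<longrightarrow> (\<forall>j. int p dvd Polynomial.coeff S j))"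

lemma peval_lin_zero: "(\<And>j. j < d \<Longrightarrow> int p dvd c j) \<Longrightarrow> peval L w (lin d c) = \<zero>"
proof -
  assume a: "\<And>j. j < d \<Longrightarrow> int p dvd c j"
  have "peval L w (lin d c) = peval L w (\<Sum>j<d. 0)"
    unfolding lin_def
    by (rule peval_sum_cong[OF w_in]) (use a in \<open>simp_all add: peval_monom w_in iota_dvd\<close>)
  then show ?thesis by simp
qed

lemma peval_dvd_zero: "bnd d S \<Longrightarrow> (\<And>j. int p dvd Polynomial.coeff S j) \<Longrightarrow> peval L w S = \<zero>"
proof -
  assume b: "bnd d S" and a: "\<And>j. int p dvd Polynomial.coeff S j"
  have "peval L w S = peval L w (lin d (Polynomial.coeff S))" using bnd_lin_eq[OF b] by simp
  also have "\<dots> = \<zero>" by (rule peval_lin_zero) (rule a)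
  finally show ?thesis .
qed

lemma indep_le: "indep d \<Longrightarrow> d \<le> t"
proof -
  assume ind: "indep d"
  define A where "A = (\<Pi>\<^sub>E j\<in>{..<d}. {0..<int p})"
  define g where "g c = peval L w (lin d c)" for c
  have inj: "inj_on g A"
  proof (rule inj_onI)
    fix c c' assume c: "c \<in> A" "c' \<in> A" "g c = g c'"
    have "peval L w (lin d c - lin d c') = \<zero>"
      using c(3) w_in unfolding g_def by (simp add: peval_diff)
    moreover have "bnd d (lin d c - lin d c')" by (intro bnd_diff bnd_lin)
    ultimately have dv: "int p dvd Polynomial.coeff (lin d c - lin d c') j" for j
      using ind unfolding indep_def by blast
    show "c = c'"
    proof (rule PiE_ext[OF c(1)[unfolded A_def] c(2)[unfolded A_def]])
      fix j assume j: "j \<in> {..<d}"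
      have "Polynomial.coeff (lin d c - lin d c') j = c j - c' j" using j by (simp add: coeff_lin)
      then have "int p dvd c j - c' j" using dv[of j] by simp
      then have m: "c j mod int p = c' j mod int p" by (simp only: mod_eq_dvd_iff)
      have r1: "c j \<in> {0..<int p}" by (rule PiE_mem[OF c(1)[unfolded A_def] j])
      have r2: "c' j \<in> {0..<int p}" by (rule PiE_mem[OF c(2)[unfolded A_def] j])
      have e1: "c j mod int p = c j" using r1 by (intro mod_pos_pos_trivial) auto
      have e2: "c' j mod int p = c' j" using r2 by (intro mod_pos_pos_trivial) auto
      show "c j = c' j" using m e1 e2 by linarith
    qed
  qed
  have img: "g ` A \<subseteq> {y \<in> carrier L. y [^] (p ^ t) = y}"
    unfolding g_def using fixed w_in by auto
  have fin: "finite {y \<in> carrier L. y [^] (p ^ t) = y}" using roots_bound by blast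
  have "card A = p ^ d" unfolding A_def by (simp add: card_PiE)
  moreover have "card A \<le> card {y \<in> carrier L. y [^] (p ^ t) = y}"
    using card_inj_on_le[OF inj img fin] .
  ultimately have "p ^ d \<le> p ^ t" using conjunct2[OF roots_bound] by linarith
  then show "d \<le> t" by (rule power_le_imp_le_exp[OF p_gt1])
qed


lemma indep_0: "indep 0"
  unfolding indep_def bnd_def by auto

definition dd :: nat where "dd = (GREATEST d. indep d)"

lemma dd_indep: "indep dd"
  unfolding dd_def by (rule GreatestI_nat[where P = indep and k = 0 and b = t, OF indep_0 indep_le])

lemma dd_le: "dd \<le> t"
  by (rule indep_le[OF dd_indep])

lemma dd_not: "\<not> indep (Suc dd)"
proof
  assume "indep (Suc dd)"
  then have "Suc dd \<le> dd" unfolding dd_def by (rule Greatest_le_nat) (rule indep_le)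
  then show False by simp
qed

lemma top_red: "\<exists>h. bnd dd h \<and> peval L w (Polynomial.monom 1 dd) = peval L w h"
proof -
  obtain S j0 where S: "bnd (Suc dd) S" "peval L w S = \<zero>" "\<not> int p dvd Polynomial.coeff S j0"
    using dd_not unfolding indep_def by blast
  define c where "c = Polynomial.coeff S dd"
  define S' where "S' = S - Polynomial.monom c dd"
  have bS': "bnd dd S'"
    using S(1) unfolding bnd_def S'_def c_def by (auto simp: coeff_monom Suc_le_eq)
  have pS: "peval L w S = peval L w S' \<oplus> iota L c \<otimes> w [^] dd"
  proof -
    have "S = S' + Polynomial.monom c dd" unfolding S'_def by simp
    then show ?thesis using w_in by (simp add: peval_add peval_monom)
  qed
  show ?thesis
  proof (cases "int p dvd c")
    case True
    then have "peval L w S' = \<zero>" using pS S(2) w_in by (simp add: iota_dvd)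
    then have "\<forall>j. int p dvd Polynomial.coeff S' j" using dd_indep bS' unfolding indep_def by blast
    then have all: "int p dvd Polynomial.coeff S' j" for j by blast
    have "int p dvd Polynomial.coeff S j" for j
    proof (cases "j = dd")
      case True then show ?thesis using \<open>int p dvd c\<close> unfolding c_def by simp
    next
      case False then show ?thesis using all[of j] unfolding S'_def by (simp add: coeff_monom)
    qed
    then show ?thesis using S(3) by blast
  next
    case False
    then obtain u where u: "iota L u \<otimes> iota L c = \<one>" by (rule iota_inv)
    have eq: "iota L c \<otimes> w [^] dd = \<ominus> peval L w S'"
      using pS S(2) w_in by (metis add.inv_closed add.inv_equality iota_closed m_closed nat_pow_closed peval_closed
          a_comm minus_equality)
    have "peval L w (Polynomial.monom 1 dd) = w [^] dd" using w_in by (simp add: peval_monom1)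
    also have "\<dots> = (iota L u \<otimes> iota L c) \<otimes> w [^] dd" using u w_in by simp
    also have "\<dots> = iota L u \<otimes> (\<ominus> peval L w S')" using eq w_in by (simp add: m_assoc)
    also have "\<dots> = peval L w (smult (- u) S')" using w_in by (simp add: peval_smult peval_neg iota_neg r_minus l_minus)
    finally show ?thesis using bnd_smult[OF bS'] by blast
  qed
qed

lemma reduce_step: "bnd (Suc dd) s \<Longrightarrow> \<exists>r. bnd dd r \<and> peval L w s = peval L w r"
proof -
  assume b: "bnd (Suc dd) s"
  obtain h where h: "bnd dd h" "peval L w (Polynomial.monom 1 dd) = peval L w h" using top_red by blast
  define c where "c = Polynomial.coeff s dd"
  define r where "r = (s - Polynomial.monom c dd) + smult c h"
  have "bnd dd (s - Polynomial.monom c dd)"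
    using b unfolding bnd_def c_def by (auto simp: coeff_monom Suc_le_eq)
  then have br: "bnd dd r" unfolding r_def using h(1) by (intro bnd_add bnd_smult)
  have "Polynomial.monom c dd = smult c (Polynomial.monom 1 dd)" by (simp add: smult_monom)
  then have "peval L w (Polynomial.monom c dd) = peval L w (smult c h)"
    using h(2) w_in by (simp add: peval_smult)
  then have "peval L w r = peval L w s"
    unfolding r_def using w_in by (simp add: peval_add peval_diff peval_smult a_minus_def a_assoc l_neg)
  then show ?thesis using br by metis
qed

lemma reduce: "\<exists>r. bnd dd r \<and> peval L w q = peval L w r"
proof (induction q)
  case 0 then show ?case using bnd_0 by blast
next
  case (pCons a q)
  then obtain r where r: "bnd dd r" "peval L w q = peval L w r" by blast
  have "peval L w (pCons a q) = peval L w (pCons a r)" using r(2) w_in by (simp add: peval_pCons)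
  moreover have "bnd (Suc dd) (pCons a r)"
    using r(1) unfolding bnd_def by (auto simp: coeff_pCons split: nat.splits)
  ultimately show ?case using reduce_step by metis
qed


definition Rp :: "nat \<Rightarrow> int poly" where
  "Rp n = (SOME r. bnd dd r \<and> peval L w (Polynomial.monom 1 n) = peval L w r)"

lemma Rp: "bnd dd (Rp n) \<and> peval L w (Rp n) = w [^] n"
proof -
  have "bnd dd (Rp n) \<and> peval L w (Polynomial.monom 1 n) = peval L w (Rp n)"
    unfolding Rp_def by (rule someI_ex[OF reduce])
  then show ?thesis using w_in by (simp add: peval_monom1)
qed

definition Fc :: "nat \<Rightarrow> nat \<Rightarrow> int" where
  "Fc n = (\<lambda>j\<in>{..<t}. if j < dd then Polynomial.coeff (Rp n) j mod int p else 0)"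

lemma Fc_carrier: "Fc n \<in> carrier (Zp_power p t)"
proof -
  have "p > 0" using p_gt1 by simp
  then show ?thesis unfolding Fc_def using Zp_carrier[of p t] by auto
qed

lemma Fc_inj: "i < v \<Longrightarrow> j < v \<Longrightarrow> Fc i = Fc j \<Longrightarrow> i = j"
proof -
  assume a: "i < v" "j < v" "Fc i = Fc j"
  have "int p dvd Polynomial.coeff (Rp i - Rp j) k" for k
  proof (cases "k < dd")
    case True
    then have "k < t" using dd_le by simp
    then have "Fc i k = Fc j k" using a(3) by simp
    then have "Polynomial.coeff (Rp i) k mod int p = Polynomial.coeff (Rp j) k mod int p"
      using True \<open>k < t\<close> unfolding Fc_def by simp
    then show ?thesis by (simp add: mod_eq_dvd_iff)
  next
    case False
    then show ?thesis using Rp[of i] Rp[of j] unfolding bnd_def by simp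
  qed
  then have "peval L w (Rp i - Rp j) = \<zero>"
    using peval_dvd_zero bnd_diff Rp by blast
  then have "peval L w (Rp i) = peval L w (Rp j)"
    using w_in by (simp add: peval_diff)
  then have "w [^] i = w [^] j" using Rp by simp
  then show ?thesis using w_inj a by blast
qed

lemma block_sum:
  assumes i: "i < v"
  shows "finprod (Zp_power p t) (\<lambda>x. Fc (nat x)) ((\<lambda>s. (s + int i) mod int v) ` nonzero_squares v)
         = \<one>\<^bsub>Zp_power p t\<^esub>"
proof -
  define gm where "gm s = (s + i) mod v" for s
  have B: "(\<lambda>s. (s + int i) mod int v) ` nonzero_squares v = (\<lambda>s. int (gm s)) ` Qs"
    unfolding nonzero_squares_eq image_image gm_def by (simp add: zmod_int)
  have inj: "inj_on (\<lambda>s. int (gm s)) Qs"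
  proof (rule inj_onI)
    fix s s' assume a: "s \<in> Qs" "s' \<in> Qs" "int (gm s) = int (gm s')"
    then have "[s + i = s' + i] (mod v)" unfolding gm_def cong_def by simp
    then have "[s = s'] (mod v)" by (simp add: cong_add_rcancel_nat)
    moreover have "s < v" "s' < v" using a unfolding Qs_def by auto
    ultimately show "s = s'" using small_eq by blast
  qed
  have finB: "finite ((\<lambda>s. int (gm s)) ` Qs)" using finite_Qs by simp
  have fB: "(\<lambda>x. Fc (nat x)) \<in> (\<lambda>s. int (gm s)) ` Qs \<rightarrow> carrier (Zp_power p t)"
    using Fc_carrier by auto
  have "finprod (Zp_power p t) (\<lambda>x. Fc (nat x)) ((\<lambda>s. int (gm s)) ` Qs)
        = (\<lambda>j\<in>{..<t}. (\<Sum>b\<in>(\<lambda>s. int (gm s)) ` Qs. Fc (nat b) j) mod int p)"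
    by (rule Zp_finprod[OF finB fB])
  also have "\<dots> = (\<lambda>j\<in>{..<t}. (\<Sum>s\<in>Qs. Fc (gm s) j) mod int p)"
    using sum.reindex[OF inj, of "\<lambda>b. Fc (nat b) _"] by (simp add: sum.reindex[OF inj])
  also have "\<dots> = (\<lambda>j\<in>{..<t}. 0)"
  proof (rule restrict_ext)
    fix j assume j: "j \<in> {..<t}"
    show "(\<Sum>s\<in>Qs. Fc (gm s) j) mod int p = 0"
    proof (cases "j < dd")
      case False
      then show ?thesis using j unfolding Fc_def by simp
    next
      case True
      define T where "T = (\<Sum>s\<in>Qs. Rp (gm s))"
      have bT: "bnd dd T" unfolding T_def using Rp finite_Qs by (intro bnd_sum) auto
      have "peval L w T = peval L w (\<Sum>s\<in>Qs. Polynomial.monom 1 i * Polynomial.monom 1 s)"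
        unfolding T_def
      proof (rule peval_sum_cong[OF w_in finite_Qs])
        fix s assume "s \<in> Qs"
        have "peval L w (Rp (gm s)) = w [^] gm s" using Rp by simp
        also have "\<dots> = w [^] (i + s)" unfolding gm_def using w_pow_mod[of "i + s"] by (simp add: add.commute)
        also have "\<dots> = peval L w (Polynomial.monom 1 i * Polynomial.monom 1 s)"
          using w_in by (simp add: mult_monom peval_monom1)
        finally show "peval L w (Rp (gm s)) = peval L w (Polynomial.monom 1 i * Polynomial.monom 1 s)" .
      qed
      also have "\<dots> = peval L w (Polynomial.monom 1 i * (\<Sum>s\<in>Qs. Polynomial.monom 1 s))"
        by (simp add: sum_distrib_left)
      also have "\<dots> = \<zero>" using w_in Qzero by (simp add: peval_mult peval_monom1)
      finally have "peval L w T = \<zero>" .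
      then have "int p dvd Polynomial.coeff T j" using dd_indep bT unfolding indep_def by blast
      moreover have "(\<Sum>s\<in>Qs. Fc (gm s) j) mod int p = Polynomial.coeff T j mod int p"
        using True j unfolding Fc_def T_def by (simp add: coeff_sum mod_sum_eq)
      ultimately show ?thesis by simp
    qed
  qed
  also have "\<dots> = \<one>\<^bsub>Zp_power p t\<^esub>" by (simp add: Zp_one)
  finally show ?thesis using B by simp
qed

theorem additive: "additive_under (Zp_power p t) (paley_points v) (paley_blocks v)"
  unfolding additive_under_def
proof (intro exI[of _ "\<lambda>x. Fc (nat x)"] conjI)
  show "(\<lambda>x. Fc (nat x)) \<in> paley_points v \<rightarrow> carrier (Zp_power p t)" using Fc_carrier by auto
  show "inj_on (\<lambda>x. Fc (nat x)) (paley_points v)"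
  proof (rule inj_onI)
    fix x y assume a: "x \<in> paley_points v" "y \<in> paley_points v" "Fc (nat x) = Fc (nat y)"
    then have "nat x < v" "nat y < v" "0 \<le> x" "0 \<le> y" unfolding paley_points_def by auto
    then have "nat x = nat y" using Fc_inj a(3) by blast
    then show "x = y" using \<open>0 \<le> x\<close> \<open>0 \<le> y\<close> by simp
  qed
  show "\<forall>B\<in>paley_blocks v. finprod (Zp_power p t) (\<lambda>x. Fc (nat x)) B = \<one>\<^bsub>Zp_power p t\<^esub>"
  proof
    fix B assume "B \<in> paley_blocks v"
    then obtain i where i: "i \<in> {0..<int v}" "B = (\<lambda>s. (s + i) mod int v) ` nonzero_squares v"
      unfolding paley_blocks_def by blast
    then have "i = int (nat i)" "nat i < v" by auto
    then show "finprod (Zp_power p t) (\<lambda>x. Fc (nat x)) B = \<one>\<^bsub>Zp_power p t\<^esub>"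
      using block_sum[of "nat i"] i(2) by simp
  qed
qed

end

lemma (in cring) pow_mod_v:
  assumes "z \<in> carrier R" "z [^] (v::nat) = \<one>"
  shows "z [^] (n::nat) = z [^] (n mod v)"
proof -
  have "n = v * (n div v) + n mod v" by simp
  then have "z [^] n = (z [^] v) [^] (n div v) \<otimes> z [^] (n mod v)"
    by (metis nat_pow_mult nat_pow_pow assms(1))
  then show ?thesis using assms by simp
qed

locale gauss_setup = paley_setup v lam + cring L
  for v lam :: nat and L :: "('a, 'b) ring_scheme" (structure) +
  fixes z :: 'a
  assumes z_in: "z \<in> carrier L" and z_v: "z [^] v = \<one>"
begin

abbreviation "Xm n \<equiv> Polynomial.monom (1::int) n"

definition Qp :: "int poly" where "Qp = (\<Sum>s\<in>Qs. Xm s)"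
definition Np :: "int poly" where "Np = (\<Sum>s\<in>Ns. Xm s)"
definition Phi :: "int poly" where "Phi = (\<Sum>s<v. Xm s)"

lemma pX: "peval L z (Xm n) = z [^] n" using z_in by (simp add: peval_monom1)

lemma pXmod: "peval L z (Xm n) = peval L z (Xm (n mod v))"
  using pow_mod_v[OF z_in z_v] by (simp add: pX)

lemma Ns_ne_Qs: "Ns \<noteq> Qs"
  using QN_disj card_QN by (metis card.empty inf.idem add_is_0 one_neq_zero)

lemma inner_sum:
  assumes m: "m \<in> Ns"
  shows "(\<Sum>a\<in>Qs. Xm ((a * (m + 1)) mod v)) =
         (if m = v - 1 then of_nat (card Qs) else if m + 1 \<in> Qs then Qp else Np)"
proof -
  have m1: "1 \<le> m" "m < v" using m unfolding Ns_def by auto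
  show ?thesis
  proof (cases "m = v - 1")
    case True
    then have "m + 1 = v" using m1 by simp
    then have "(\<Sum>a\<in>Qs. Xm ((a * (m + 1)) mod v)) = (\<Sum>a\<in>Qs. 1)" by simp
    then show ?thesis using True by simp
  next
    case False
    then have k: "m + 1 \<in> Qs \<union> Ns" using m1 QN_union by auto
    show ?thesis
    proof (cases "m + 1 \<in> Qs")
      case True
      have "bij_betw (\<lambda>a. (a * (m + 1)) mod v) Qs Qs"
        using mult_bij[OF k, of Qs] True by simp
      then have "(\<Sum>a\<in>Qs. Xm ((a * (m + 1)) mod v)) = (\<Sum>a\<in>Qs. Xm a)"
        by (rule sum.reindex_bij_betw)
      then show ?thesis using True False unfolding Qp_def by simp
    next
      case nQ: False
      have "bij_betw (\<lambda>a. (a * (m + 1)) mod v) Qs Ns"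
        using mult_bij[OF k, of Qs] nQ by simp
      then have "(\<Sum>a\<in>Qs. Xm ((a * (m + 1)) mod v)) = (\<Sum>a\<in>Ns. Xm a)"
        by (rule sum.reindex_bij_betw)
      then show ?thesis using nQ False unfolding Np_def by simp
    qed
  qed
qed

lemma Phi_split: "Phi = 1 + Qp + Np"
proof -
  have "{..<v} = insert 0 {1..<v}" using v_ge3 by auto
  then have "Phi = Xm 0 + (\<Sum>s\<in>{1..<v}. Xm s)" unfolding Phi_def by simp
  also have "(\<Sum>s\<in>{1..<v}. Xm s) = Qp + Np"
    unfolding Qp_def Np_def QN_union[symmetric]
    by (rule sum.union_disjoint[OF finite_Qs finite_Ns QN_disj])
  finally show ?thesis by (simp add: one_pCons monom_0 add.assoc)
qed

lemma gauss: "peval L z (Qp * Np) = peval L z (of_nat (lam + 1) + of_nat lam * Phi)"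
proof -
  have "Qp * Np = (\<Sum>a\<in>Qs. \<Sum>b\<in>Ns. Xm (a + b))"
    unfolding Qp_def Np_def sum_product by (simp add: mult_monom)
  also have "peval L z \<dots> = peval L z (\<Sum>a\<in>Qs. \<Sum>m\<in>Ns. Xm ((a * (m + 1)) mod v))"
  proof (rule peval_sum_cong[OF z_in finite_Qs])
    fix a assume a: "a \<in> Qs"
    have aQN: "a \<in> Qs \<union> Ns" using a by simp
    have "bij_betw (\<lambda>m. (m * a) mod v) Ns Ns"
      using mult_bij[OF aQN, of Ns] a Ns_ne_Qs by simp
    then have "(\<Sum>b\<in>Ns. Xm (a + b)) = (\<Sum>m\<in>Ns. Xm (a + (m * a) mod v))"
      by (rule sum.reindex_bij_betw[symmetric])
    also have "peval L z \<dots> = peval L z (\<Sum>m\<in>Ns. Xm ((a * (m + 1)) mod v))"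
    proof (rule peval_sum_cong[OF z_in finite_Ns])
      fix m assume "m \<in> Ns"
      have "(a + (m * a) mod v) mod v = (a * (m + 1)) mod v"
        by (simp add: mod_add_right_eq algebra_simps)
      then show "peval L z (Xm (a + (m * a) mod v)) = peval L z (Xm ((a * (m + 1)) mod v))"
        using pXmod[of "a + (m * a) mod v"] pXmod[of "(a * (m + 1)) mod v"] by simp
    qed
    finally show "peval L z (\<Sum>b\<in>Ns. Xm (a + b)) = peval L z (\<Sum>m\<in>Ns. Xm ((a * (m + 1)) mod v))" .
  qed
  also have "(\<Sum>a\<in>Qs. \<Sum>m\<in>Ns. Xm ((a * (m + 1)) mod v)) = (\<Sum>m\<in>Ns. \<Sum>a\<in>Qs. Xm ((a * (m + 1)) mod v))"
    by (rule sum.swap)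
  also have "\<dots> = (\<Sum>m\<in>Ns. (if m = v - 1 then of_nat (card Qs) else if m + 1 \<in> Qs then Qp else Np))"
    by (rule sum.cong[OF refl], rule inner_sum, assumption)
  also have "\<dots> = of_nat (lam + 1) + of_nat lam * Phi"
  proof -
    define f where "f m = (if m = v - 1 then of_nat (card Qs) else if m + 1 \<in> Qs then Qp else (Np :: int poly))" for m
    have vm1: "v - 1 \<in> Ns"
    proof -
      have "chi (int (v - 1)) = - chi (int 1)" using chi_neg[of 1] v_ge3 by simp
      then show ?thesis using chi_one v_ge3 unfolding Ns_def by simp
    qed
    have NsU: "Ns = insert (v - 1) (Ns1 \<union> Ns2)"
    proof
      show "insert (v - 1) (Ns1 \<union> Ns2) \<subseteq> Ns" using vm1 unfolding Ns1_def Ns2_def by auto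
      show "Ns \<subseteq> insert (v - 1) (Ns1 \<union> Ns2)"
      proof
        fix m assume m: "m \<in> Ns"
        show "m \<in> insert (v - 1) (Ns1 \<union> Ns2)"
        proof (cases "m = v - 1")
          case False
          then have "m + 1 \<in> {1..<v}" using m unfolding Ns_def by auto
          then have "m + 1 \<in> Qs \<union> Ns" using QN_union by simp
          then show ?thesis using m unfolding Ns1_def Ns2_def by auto
        qed simp
      qed
    qed
    have nv: "v - 1 \<notin> Ns1 \<union> Ns2" using v_ge3 unfolding Ns1_def Ns2_def Qs_def Ns_def by auto
    have d12: "Ns1 \<inter> Ns2 = {}" using QN_disj unfolding Ns1_def Ns2_def by auto
    have fin12: "finite Ns1" "finite Ns2" using finite_Ns unfolding Ns1_def Ns2_def by auto
    have "(\<Sum>m\<in>Ns. f m) = f (v - 1) + (\<Sum>m\<in>Ns1. f m) + (\<Sum>m\<in>Ns2. f m)"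
      unfolding NsU using nv d12 fin12 by (simp add: sum.union_disjoint add.assoc)
    also have "(\<Sum>m\<in>Ns1. f m) = (\<Sum>m\<in>Ns1. Qp)"
      using v_ge3 by (intro sum.cong) (auto simp: f_def Ns1_def Qs_def)
    also have "(\<Sum>m\<in>Ns2. f m) = (\<Sum>m\<in>Ns2. Np)"
      using v_ge3 QN_disj by (intro sum.cong) (auto simp: f_def Ns2_def Ns_def Qs_def)
    also have "f (v - 1) = of_nat (2 * lam + 1)" unfolding f_def using card_QN by simp
    finally have "(\<Sum>m\<in>Ns. f m) = of_nat (2 * lam + 1) + of_nat lam * Qp + of_nat lam * Np"
      using card_Ns12 by simp
    also have "\<dots> = of_nat (lam + 1) + of_nat lam * Phi"
      unfolding Phi_split by (simp add: algebra_simps)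
    finally show ?thesis unfolding f_def .
  qed
  finally show ?thesis .
qed

lemma neg_eval: "peval L (z [^] (v - 1)) Qp = peval L z Np"
proof -
  have "peval L (z [^] (v - 1)) Qp = peval L z (pcompose Qp (Xm (v - 1)))"
    using z_in by (simp add: peval_pcompose pX)
  also have "pcompose Qp (Xm (v - 1)) = (\<Sum>q\<in>Qs. pcompose (Xm q) (Xm (v - 1)))"
    unfolding Qp_def by (rule pcompose_sum)
  also have "peval L z \<dots> = peval L z (\<Sum>q\<in>Qs. Xm (v - q))"
  proof (rule peval_sum_cong[OF z_in finite_Qs])
    fix q assume q: "q \<in> Qs"
    then have q1: "1 \<le> q" "q < v" unfolding Qs_def by auto
    have "peval L z (pcompose (Xm q) (Xm (v - 1))) = (z [^] (v - 1)) [^] q"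
      using z_in by (simp add: peval_pcompose pX peval_monom1)
    also have "\<dots> = z [^] ((v - 1) * q)" using z_in by (simp add: nat_pow_pow)
    also have "\<dots> = z [^] (((v - 1) * q) mod v)" by (rule pow_mod_v[OF z_in z_v])
    also have "((v - 1) * q) mod v = v - q"
    proof -
      have "int ((v - 1) * q) = int ((v - q) + v * (q - 1))"
        using q1 v_ge3 by (simp add: of_nat_diff algebra_simps)
      then have e: "(v - 1) * q = (v - q) + v * (q - 1)" by (simp only: of_nat_eq_iff)
      have "((v - q) + v * (q - 1)) mod v = (v - q) mod v" by (rule mod_mult_self2)
      also have "\<dots> = v - q" using q1 by simp
      finally show ?thesis using e by simp
    qed
    finally show "peval L z (pcompose (Xm q) (Xm (v - 1))) = peval L z (Xm (v - q))" by (simp add: pX)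
  qed
  also have "(\<Sum>q\<in>Qs. Xm (v - q)) = Np"
    unfolding Np_def by (rule sum.reindex_bij_betw[OF bij_neg])
  finally show ?thesis .
qed

end


lemma (in cring) eval_ones:
  assumes z: "z \<in> carrier R"
  shows "eval (replicate n \<one>) z = peval R z (\<Sum>i<n. Polynomial.monom 1 i)"
proof (induction n)
  case 0 then show ?case by simp
next
  case (Suc n)
  have "eval (replicate (Suc n) \<one>) z = \<one> \<otimes> z [^] n \<oplus> eval (replicate n \<one>) z" by simp
  also have "\<dots> = peval R z (Polynomial.monom 1 n) \<oplus> peval R z (\<Sum>i<n. Polynomial.monom 1 i)"
    using Suc z by (simp add: peval_monom1)
  also have "\<dots> = peval R z (\<Sum>i<Suc n. Polynomial.monom 1 i)"
    using z by (simp add: peval_add a_comm)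
  finally show ?case .
qed

lemma (in field) iota_char_dvd:
  assumes pp: "prime p" and ch: "iota R (int p) = \<zero>" and z: "iota R a = \<zero>"
  shows "int p dvd a"
proof (rule ccontr)
  assume nd: "\<not> int p dvd a"
  have modp: "iota R b = iota R (b mod int p)" for b
  proof -
    have "b = b mod int p + int p * (b div int p)" by simp
    then have "iota R b = iota R (b mod int p) \<oplus> iota R (int p) \<otimes> iota R (b div int p)"
      by (metis iota_add iota_mult)
    then show ?thesis using ch by simp
  qed
  have pr: "prime (int p)" using pp by simp
  have "coprime (int p) a" using prime_imp_coprime[OF pr nd] .
  then have "coprime a (int p)" by (simp add: coprime_commute)
  then obtain u where u: "[a * u = 1] (mod int p)" using cong_solve_coprime_int by blast
  have "iota R (a * u) = iota R ((a * u) mod int p)" by (rule modp)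
  also have "(a * u) mod int p = 1" using u prime_gt_1_nat[OF pp] by (simp add: cong_def)
  finally have "iota R a \<otimes> iota R u = \<one>" by (simp add: iota_mult)
  then show False using z by simp
qed

lemma hom_add_pow_one:
  assumes "ring R0" "ring L" "h \<in> ring_hom R0 L"
  shows "h (add_pow R0 (n::nat) \<one>\<^bsub>R0\<^esub>) = add_pow L n \<one>\<^bsub>L\<^esub>"
proof (induction n)
  case 0
  interpret R0: ring R0 by fact
  interpret L: ring L by fact
  show ?case using ring_hom_zero[OF assms(3) assms(1,2)] by simp
next
  case (Suc n)
  interpret R0: ring R0 by fact
  interpret L: ring L by fact
  have "h (add_pow R0 (Suc n) \<one>\<^bsub>R0\<^esub>) = h (add_pow R0 n \<one>\<^bsub>R0\<^esub> \<oplus>\<^bsub>R0\<^esub> \<one>\<^bsub>R0\<^esub>)"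
    by (simp add: R0.add.nat_pow_Suc)
  also have "\<dots> = h (add_pow R0 n \<one>\<^bsub>R0\<^esub>) \<oplus>\<^bsub>L\<^esub> h \<one>\<^bsub>R0\<^esub>"
    by (rule ring_hom_add[OF assms(3)]) simp_all
  also have "\<dots> = add_pow L (Suc n) \<one>\<^bsub>L\<^esub>"
    using Suc ring_hom_one[OF assms(3)] by (simp add: L.add.nat_pow_Suc)
  finally show ?case .
qed

lemma residue_char:
  assumes pp: "prime p"
  shows "add_pow (residue_ring (int p)) (p::nat) \<one>\<^bsub>residue_ring (int p)\<^esub> = \<zero>\<^bsub>residue_ring (int p)\<^esub>"
proof -
  interpret RP: residues_prime p "residue_ring (int p)" by unfold_locales (simp_all add: pp)
  have "add_pow (residue_ring (int p)) (n::nat) \<one>\<^bsub>residue_ring (int p)\<^esub> = int n mod int p" for n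
  proof (induction n)
    case 0 then show ?case by (simp add: RP.res_zero_eq)
  next
    case (Suc n)
    then show ?case by (simp add: RP.add.nat_pow_Suc RP.res_add_eq RP.res_one_eq mod_add_right_eq add.commute)
  qed
  then show ?thesis by (simp add: RP.res_zero_eq)
qed

lemma exists_field:
  assumes pp: "prime p" and v2: "v \<ge> 2"
  obtains L :: "((int list \<times> nat) multiset \<Rightarrow> int) ring" and \<zeta>
  where "field L" "iota L (int p) = \<zero>\<^bsub>L\<^esub>" "\<zeta> \<in> carrier L"
    "peval L \<zeta> (\<Sum>i<v. Polynomial.monom 1 i) = \<zero>\<^bsub>L\<^esub>"
proof -
  interpret RP: residues_prime p "residue_ring (int p)" by unfold_locales (simp_all add: pp)
  have fR: "field (residue_ring (int p))" by (rule RP.is_field)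
  obtain L :: "((int list \<times> nat) multiset \<Rightarrow> int) ring" where alg: "algebraic_closure L (ring.indexed_const (residue_ring (int p)) ` carrier (residue_ring (int p)))"
    and hom: "ring.indexed_const (residue_ring (int p)) \<in> ring_hom (residue_ring (int p)) L"
    using field.exists_closure[OF fR] by blast
  interpret AC: algebraic_closure L "ring.indexed_const (residue_ring (int p)) ` carrier (residue_ring (int p))"
    by (rule alg)
  have fL: "field L" by (rule AC.field_axioms)
  have ch: "iota L (int p) = \<zero>\<^bsub>L\<^esub>"
  proof -
    have "iota L (int p) = add_pow L p \<one>\<^bsub>L\<^esub>" unfolding iota_def by (simp add: add_pow_int_ge)
    also have "\<dots> = ring.indexed_const (residue_ring (int p)) (add_pow (residue_ring (int p)) p \<one>\<^bsub>residue_ring (int p)\<^esub>)"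
      by (rule hom_add_pow_one[symmetric]) (use hom RP.ring_axioms AC.ring_axioms in auto)
    also have "\<dots> = ring.indexed_const (residue_ring (int p)) \<zero>\<^bsub>residue_ring (int p)\<^esub>"
      using residue_char[OF pp] by simp
    also have "\<dots> = \<zero>\<^bsub>L\<^esub>" using ring_hom_zero[OF hom RP.ring_axioms AC.ring_axioms] .
    finally show ?thesis .
  qed
  define P where "P = replicate v \<one>\<^bsub>L\<^esub>"
  have oneK: "\<one>\<^bsub>L\<^esub> \<in> ring.indexed_const (residue_ring (int p)) ` carrier (residue_ring (int p))"
    using ring_hom_one[OF hom] by (metis RP.one_closed image_eqI)
  have PK: "P \<in> carrier ((ring.indexed_const (residue_ring (int p)) ` carrier (residue_ring (int p))) [X]\<^bsub>L\<^esub>)"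
    unfolding univ_poly_carrier[symmetric] polynomial_def P_def using oneK v2 by auto
  have PL: "P \<in> carrier (poly_ring L)"
    unfolding univ_poly_carrier[symmetric] polynomial_def P_def using v2 by auto
  have "AC.splitted P" by (rule AC.roots_over_subfield[OF PK])
  then have "size (AC.roots P) = v - 1" unfolding AC.splitted_def P_def by simp
  then have "AC.roots P \<noteq> {#}" using v2 by auto
  then obtain \<zeta> where "\<zeta> \<in># AC.roots P" by blast
  then have "AC.is_root P \<zeta>" using AC.roots_mem_iff_is_root[OF PL] by simp
  then have z: "\<zeta> \<in> carrier L" "AC.eval P \<zeta> = \<zero>\<^bsub>L\<^esub>" unfolding AC.is_root_def by auto
  have "peval L \<zeta> (\<Sum>i<v. Polynomial.monom 1 i) = \<zero>\<^bsub>L\<^esub>"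
    using AC.eval_ones[OF z(1), of v] z(2) unfolding P_def by simp
  then show ?thesis using that fL ch z(1) by blast
qed


lemma xm1_Phi: "(Polynomial.monom 1 1 - 1) * (\<Sum>i<n. Polynomial.monom (1::int) i) = Polynomial.monom 1 n - 1"
proof (induction n)
  case 0 then show ?case by (simp add: monom_0 one_pCons)
next
  case (Suc n)
  have "(Polynomial.monom 1 1 - 1) * (\<Sum>i<Suc n. Polynomial.monom (1::int) i)
        = (Polynomial.monom 1 1 - 1) * (\<Sum>i<n. Polynomial.monom (1::int) i) + (Polynomial.monom 1 1 - 1) * Polynomial.monom 1 n"
    by (simp add: algebra_simps)
  also have "\<dots> = Polynomial.monom 1 (Suc n) - 1"
    using Suc by (simp add: algebra_simps mult_monom)
  finally show ?case .
qed

lemma (in cring) peval_of_nat: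
  assumes "z \<in> carrier R" shows "peval R z (of_nat n) = iota R (int n)"
  using assms by (simp add: of_nat_poly peval_const)

theorem corollary3p4:
  fixes v lam p :: nat
  assumes "prime v" and "v = 4 * lam + 3"
    and "prime p" and "p dvd lam + 1"
  shows "additive_under (Zp_power p (ord v p)) (paley_points v) (paley_blocks v)"
proof -
  have PSax: "paley_setup v lam" by unfold_locales (use assms in auto)
  interpret PS: paley_setup v lam by (rule PSax)
  have v3: "v \<ge> 3" using assms by simp
  have "p \<le> lam + 1" using assms(4) by (simp add: dvd_imp_le)
  then have plt: "p < v" using assms(2) by simp
  have ndv: "\<not> p dvd v"
  proof
    assume "p dvd v"
    then have "p = 1 \<or> p = v" using assms(1) unfolding prime_nat_iff by blast
    then show False using plt assms(3) by auto
  qed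
  have "coprime p v" using prime_imp_coprime[OF assms(3) ndv] .
  then have cop: "coprime v p" by (simp add: coprime_commute)
  have ordp: "0 < ord v p" "[p ^ ord v p = 1] (mod v)" using coprime_ord[OF cop] by auto
  obtain L :: "((int list \<times> nat) multiset \<Rightarrow> int) ring" and \<zeta>
    where fL: "field L" and ch: "iota L (int p) = \<zero>\<^bsub>L\<^esub>" and z: "\<zeta> \<in> carrier L"
      and phi0: "peval L \<zeta> (\<Sum>i<v. Polynomial.monom 1 i) = \<zero>\<^bsub>L\<^esub>"
    using exists_field[OF assms(3), of v] v3 by auto
  interpret F: field L by (rule fL)
  have zv: "\<zeta> [^]\<^bsub>L\<^esub> v = \<one>\<^bsub>L\<^esub>"
  proof -
    have "peval L \<zeta> ((Polynomial.monom 1 1 - 1) * (\<Sum>i<v. Polynomial.monom (1::int) i)) = \<zero>\<^bsub>L\<^esub>"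
      using z phi0 by (simp add: F.peval_mult)
    then have "\<zeta> [^]\<^bsub>L\<^esub> v \<ominus>\<^bsub>L\<^esub> \<one>\<^bsub>L\<^esub> = \<zero>\<^bsub>L\<^esub>"
      unfolding xm1_Phi using z by (simp add: F.peval_diff F.peval_monom1)
    then show ?thesis using z F.r_right_minus_eq by simp
  qed
  interpret GS: gauss_setup v lam L \<zeta>
    by (intro gauss_setup.intro gauss_setup_axioms.intro PSax F.cring_axioms z zv)
  have mult0: "int p dvd a \<Longrightarrow> iota L a = \<zero>\<^bsub>L\<^esub>" for a
  proof -
    assume "int p dvd a"
    then obtain k where "a = int p * k" by blast
    then show ?thesis using ch by (simp add: F.iota_mult)
  qed
  have zne: "\<zeta> \<noteq> \<one>\<^bsub>L\<^esub>"
  proof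
    assume z1: "\<zeta> = \<one>\<^bsub>L\<^esub>"
    have "peval L \<zeta> (\<Sum>i<v. Polynomial.monom 1 i) = peval L \<zeta> (\<Sum>i<v. 1)"
      by (rule F.peval_sum_cong[OF z]) (simp_all add: z1 F.peval_monom1)
    also have "(\<Sum>i<v. (1::int poly)) = of_nat v" by simp
    also have "peval L \<zeta> (of_nat v) = iota L (int v)" using z by (rule F.peval_of_nat)
    finally have "iota L (int v) = \<zero>\<^bsub>L\<^esub>" using phi0 by simp
    then have "int p dvd int v" using F.iota_char_dvd[OF assms(3) ch] by blast
    then show False using ndv by simp
  qed
  have prod0: "peval L \<zeta> GS.Qp \<otimes>\<^bsub>L\<^esub> peval L \<zeta> GS.Np = \<zero>\<^bsub>L\<^esub>"
  proof -
    have "peval L \<zeta> GS.Qp \<otimes>\<^bsub>L\<^esub> peval L \<zeta> GS.Np = peval L \<zeta> (GS.Qp * GS.Np)"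
      using z by (simp add: F.peval_mult)
    also have "\<dots> = peval L \<zeta> (of_nat (lam + 1) + of_nat lam * GS.Phi)" by (rule GS.gauss)
    also have "\<dots> = peval L \<zeta> (of_nat (lam + 1)) \<oplus>\<^bsub>L\<^esub> peval L \<zeta> (of_nat lam) \<otimes>\<^bsub>L\<^esub> peval L \<zeta> GS.Phi"
      by (simp only: F.peval_add[OF z] F.peval_mult[OF z])
    also have "peval L \<zeta> (of_nat (lam + 1)) = iota L (int (lam + 1))" by (rule F.peval_of_nat[OF z])
    also have "peval L \<zeta> GS.Phi = \<zero>\<^bsub>L\<^esub>" using phi0 unfolding GS.Phi_def .
    also have "iota L (int (lam + 1)) = \<zero>\<^bsub>L\<^esub>" using assms(4) mult0 by (metis int_dvd_int_iff)
    finally show ?thesis using z by simp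
  qed
  have QPc: "peval L \<zeta> GS.Qp \<in> carrier L" "peval L \<zeta> GS.Np \<in> carrier L" using z by simp_all
  have "peval L \<zeta> GS.Qp = \<zero>\<^bsub>L\<^esub> \<or> peval L \<zeta> GS.Np = \<zero>\<^bsub>L\<^esub>"
    using F.integral[OF prod0 QPc] .
  then obtain \<omega> where w: "\<omega> \<in> carrier L" "\<omega> [^]\<^bsub>L\<^esub> v = \<one>\<^bsub>L\<^esub>" "\<omega> \<noteq> \<one>\<^bsub>L\<^esub>"
      "peval L \<omega> GS.Qp = \<zero>\<^bsub>L\<^esub>"
  proof
    assume "peval L \<zeta> GS.Qp = \<zero>\<^bsub>L\<^esub>"
    then show thesis using that z zv zne by blast
  next
    assume N0: "peval L \<zeta> GS.Np = \<zero>\<^bsub>L\<^esub>"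
    define \<omega> where "\<omega> = \<zeta> [^]\<^bsub>L\<^esub> (v - 1)"
    have wc: "\<omega> \<in> carrier L" unfolding \<omega>_def using z by simp
    have "\<omega> [^]\<^bsub>L\<^esub> v = (\<zeta> [^]\<^bsub>L\<^esub> v) [^]\<^bsub>L\<^esub> (v - 1)"
      unfolding \<omega>_def using z by (simp add: F.nat_pow_pow mult.commute)
    then have wv: "\<omega> [^]\<^bsub>L\<^esub> v = \<one>\<^bsub>L\<^esub>" using zv by simp
    have wne: "\<omega> \<noteq> \<one>\<^bsub>L\<^esub>"
    proof
      assume "\<omega> = \<one>\<^bsub>L\<^esub>"
      then have "\<zeta> [^]\<^bsub>L\<^esub> (v - 1) \<otimes>\<^bsub>L\<^esub> \<zeta> = \<zeta>" unfolding \<omega>_def using z by simp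
      moreover have "\<zeta> [^]\<^bsub>L\<^esub> (v - 1) \<otimes>\<^bsub>L\<^esub> \<zeta> = \<zeta> [^]\<^bsub>L\<^esub> v"
        using z v3 by (simp add: F.nat_pow_Suc2[symmetric] F.nat_pow_Suc[symmetric])
      ultimately show False using zv zne by simp
    qed
    have "peval L \<omega> GS.Qp = \<zero>\<^bsub>L\<^esub>" unfolding \<omega>_def GS.neg_eval using N0 .
    then show thesis using that wc wv wne by blast
  qed
  have FPax: "field_part v lam L p (ord v p) \<omega>"
    by (intro field_part.intro field_part_axioms.intro PSax fL assms(3) ch w(1,2,3) ordp)
       (use w(4) in \<open>simp add: GS.Qp_def\<close>)
  interpret FP: field_part v lam L p "ord v p" \<omega> by (rule FPax)
  show ?thesis by (rule FP.additive)
qed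

end
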